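(* Let $S$ be an MPD-semigroup in $\mathbb N^d$ and let $\mathbf f$ be a Frobenius element of $S$. Then there exists a term order $\prec$ on $\mathbb N^d$ such that $\mathbf f=\max_\prec\mathrm{Ap}(S,\mathbf b)-\mathbf b$ for every $\mathbf b\in S\setminus\{0\}$.
   Context: $S$ is generated by finitely many $\mathbf a_1,\dots,\mathbf a_n\in\mathbb N^d$ and is an MPD-semigroup if, for a field $\Bbbk$, the $\Bbbk[x_1,\dots,x_n]$-module $\Bbbk[S]$ (via $x_i\mapsto\chi^{\mathbf a_i}$) has depth $1$. $\mathrm{pos}(S)=\{\sum_i\lambda_i\mathbf a_i:\lambda_i\in\mathbb Q_{\ge0}\}$, $\mathcal H(S)=(\mathrm{pos}(S)\setminus S)\cap\mathbb N^d$. A term order on $\mathbb N^d$ is a total order compatible with addition with $0$ least; $\mathbf f\in\mathcal H(S)$ is a Frobenius element if $\mathbf f=\max_\prec\mathcal H(S)$ for some term order $\prec$. For $\mathbf b\in S\setminus\{0\}$, the Apéry set is $\mathrm{Ap}(S,\mathbf b)=\{\mathbf a\in S: \mathbf a-\mathbf b\in\mathrm{pos}(S)\setminus S\}$. *)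

theory Defs
  imports Main "HOL-Library.Extended_Nat"
begin

(* Vectors of N^d are functions 'i => nat for a finite index type 'i (d = CARD('i)).
   The generators a_1,...,a_n are given as a list A (n = length A). *)

definition vadd :: "('i \<Rightarrow> nat) \<Rightarrow> ('i \<Rightarrow> nat) \<Rightarrow> ('i \<Rightarrow> nat)" where
  "vadd u v = (\<lambda>t. u t + v t)"

(* image of a monomial exponent alpha under x_j |-> chi^(a_j) *)
definition expo :: "('i \<Rightarrow> nat) list \<Rightarrow> (nat \<Rightarrow> nat) \<Rightarrow> ('i \<Rightarrow> nat)" where
  "expo A \<alpha> = (\<lambda>t. \<Sum>j<length A. \<alpha> j * (A ! j) t)"

definition semigroup_gen :: "('i \<Rightarrow> nat) list \<Rightarrow> ('i \<Rightarrow> nat) set" where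
  "semigroup_gen A = {expo A c | c. True}"

definition posQ :: "('i \<Rightarrow> nat) list \<Rightarrow> ('i \<Rightarrow> rat) set" where
  "posQ A = {x. \<exists>c::nat \<Rightarrow> rat. (\<forall>j<length A. c j \<ge> 0) \<and>
                 x = (\<lambda>t. \<Sum>j<length A. c j * of_nat ((A ! j) t))}"

definition ratv :: "('i \<Rightarrow> nat) \<Rightarrow> ('i \<Rightarrow> rat)" where
  "ratv v = (\<lambda>t. of_nat (v t))"

definition holes :: "('i \<Rightarrow> nat) list \<Rightarrow> ('i \<Rightarrow> nat) set" where
  "holes A = {v. ratv v \<in> posQ A \<and> v \<notin> semigroup_gen A}"

definition apery :: "('i \<Rightarrow> nat) list \<Rightarrow> ('i \<Rightarrow> nat) \<Rightarrow> ('i \<Rightarrow> nat) set" where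
  "apery A b = {a \<in> semigroup_gen A.
      (\<lambda>t. ratv a t - ratv b t) \<in> posQ A \<and>
      (\<lambda>t. ratv a t - ratv b t) \<notin> ratv ` semigroup_gen A}"

definition term_order :: "(('i \<Rightarrow> nat) \<Rightarrow> ('i \<Rightarrow> nat) \<Rightarrow> bool) \<Rightarrow> bool" where
  "term_order le \<longleftrightarrow>
     (\<forall>x. le x x) \<and> (\<forall>x y. le x y \<and> le y x \<longrightarrow> x = y) \<and>
     (\<forall>x y z. le x y \<and> le y z \<longrightarrow> le x z) \<and> (\<forall>x y. le x y \<or> le y x) \<and>
     (\<forall>x y z. le x y \<longrightarrow> le (vadd x z) (vadd y z)) \<and>
     (\<forall>x. le (\<lambda>_. 0) x)"

definition is_max :: "('a \<Rightarrow> 'a \<Rightarrow> bool) \<Rightarrow> 'a set \<Rightarrow> 'a \<Rightarrow> bool" where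
  "is_max le X x \<longleftrightarrow> x \<in> X \<and> (\<forall>y\<in>X. le y x)"

definition frobenius_element :: "('i \<Rightarrow> nat) list \<Rightarrow> ('i \<Rightarrow> nat) \<Rightarrow> bool" where
  "frobenius_element A f \<longleftrightarrow> (\<exists>le. term_order le \<and> is_max le (holes A) f)"

(* polynomials in x_0..x_{n-1}: finitely supported coefficient functions on exponent vectors
   nat => nat vanishing from index n on *)
definition polys :: "nat \<Rightarrow> ((nat \<Rightarrow> nat) \<Rightarrow> 'k::field) set" where
  "polys n = {p. finite {\<alpha>. p \<alpha> \<noteq> 0} \<and> (\<forall>\<alpha>. p \<alpha> \<noteq> 0 \<longrightarrow> (\<forall>j\<ge>n. \<alpha> j = 0))}"

definition max_ideal :: "nat \<Rightarrow> ((nat \<Rightarrow> nat) \<Rightarrow> 'k::field) set" where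
  "max_ideal n = {p \<in> polys n. p (\<lambda>_. 0) = 0}"

(* k[S] = finitely supported k-combinations of chi^s, s in S *)
definition semigroup_ring :: "('i \<Rightarrow> nat) list \<Rightarrow> (('i \<Rightarrow> nat) \<Rightarrow> 'k::field) set" where
  "semigroup_ring A = {m. finite {v. m v \<noteq> 0} \<and> {v. m v \<noteq> 0} \<subseteq> semigroup_gen A}"

(* module action p . m, via x_j |-> chi^(a_j) *)
definition act :: "('i \<Rightarrow> nat) list \<Rightarrow> ((nat \<Rightarrow> nat) \<Rightarrow> 'k::field) \<Rightarrow> (('i \<Rightarrow> nat) \<Rightarrow> 'k)
                    \<Rightarrow> (('i \<Rightarrow> nat) \<Rightarrow> 'k)" where
  "act A p m = (\<lambda>v. \<Sum>(\<alpha>, w) \<in> {(\<alpha>, w). p \<alpha> \<noteq> 0 \<and> m w \<noteq> 0 \<and> vadd w (expo A \<alpha>) = v}.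
                       p \<alpha> * m w)"

definition ideal_times_module :: "('i \<Rightarrow> nat) list \<Rightarrow> ((nat \<Rightarrow> nat) \<Rightarrow> 'k::field) list
                                   \<Rightarrow> (('i \<Rightarrow> nat) \<Rightarrow> 'k) set" where
  "ideal_times_module A fs =
     {(\<lambda>v. \<Sum>j<length fs. act A (fs ! j) (ms j) v) | ms. \<forall>j<length fs. ms j \<in> semigroup_ring A}"

definition regular_sequence :: "('i \<Rightarrow> nat) list \<Rightarrow> ((nat \<Rightarrow> nat) \<Rightarrow> 'k::field) list \<Rightarrow> bool" where
  "regular_sequence A fs \<longleftrightarrow>
     set fs \<subseteq> max_ideal (length A) \<and>
     ideal_times_module A fs \<noteq> semigroup_ring A \<and>
     (\<forall>i<length fs. \<forall>m\<in>semigroup_ring A.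
         act A (fs ! i) m \<in> ideal_times_module A (take i fs) \<longrightarrow>
         m \<in> ideal_times_module A (take i fs))"

definition depth_semigroup_ring :: "'k::field itself \<Rightarrow> ('i \<Rightarrow> nat) list \<Rightarrow> enat" where
  "depth_semigroup_ring K A =
     Sup {enat (length fs) | fs :: ((nat \<Rightarrow> nat) \<Rightarrow> 'k) list. regular_sequence A fs}"

definition MPD_semigroup :: "'k::field itself \<Rightarrow> ('i \<Rightarrow> nat) list \<Rightarrow> bool" where
  "MPD_semigroup K A \<longleftrightarrow> depth_semigroup_ring K A = 1"

end

theory Submission
  imports Defs
begin

lemma posQ_nonneg: "x \<in> posQ A \<Longrightarrow> x t \<ge> 0"
  unfolding posQ_def by (auto intro!: sum_nonneg)

lemma posQ_add: assumes "x \<in> posQ A" "y \<in> posQ A"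
  shows "(\<lambda>t. x t + y t) \<in> posQ A"
proof -
  obtain c where c: "\<forall>j<length A. c j \<ge> 0" "x = (\<lambda>t. \<Sum>j<length A. c j * of_nat ((A ! j) t))"
    using assms(1) unfolding posQ_def by blast
  obtain d where d: "\<forall>j<length A. d j \<ge> 0" "y = (\<lambda>t. \<Sum>j<length A. d j * of_nat ((A ! j) t))"
    using assms(2) unfolding posQ_def by blast
  show ?thesis unfolding posQ_def
    by (rule CollectI, rule exI[of _ "\<lambda>j. c j + d j"])
       (auto simp: c d distrib_right sum.distrib)
qed

lemma S_posQ: assumes "b \<in> semigroup_gen A" shows "ratv b \<in> posQ A"
proof -
  obtain c where "b = expo A c" using assms unfolding semigroup_gen_def by blast
  then show ?thesis unfolding posQ_def ratv_def expo_def
    by (intro CollectI exI[of _ "\<lambda>j. of_nat (c j)"]) auto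
qed

lemma ratv_inj: "ratv u = ratv v \<Longrightarrow> u = v"
  unfolding ratv_def by (auto simp: fun_eq_iff)

theorem theorem3p6:
  fixes A :: "('i::finite \<Rightarrow> nat) list" and f :: "'i \<Rightarrow> nat"
  assumes "MPD_semigroup TYPE('k::field) A"
    and "frobenius_element A f"
  shows "\<exists>le. term_order le \<and>
           (\<forall>b \<in> semigroup_gen A - {\<lambda>_. 0}. is_max le (apery A b) (vadd f b))"
proof -
  obtain le where to: "term_order le" and mx: "is_max le (holes A) f"
    using assms(2) unfolding frobenius_element_def by blast
  have refl: "\<And>x. le x x" and antis: "\<And>x y. le x y \<Longrightarrow> le y x \<Longrightarrow> x = y"
    and mono: "\<And>x y z. le x y \<Longrightarrow> le (vadd x z) (vadd y z)" and zero: "\<And>x. le (\<lambda>_. 0) x"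
    using to unfolding term_order_def by blast+
  have fh: "f \<in> holes A" and fmax: "\<And>y. y \<in> holes A \<Longrightarrow> le y f"
    using mx unfolding is_max_def by auto
  have fpos: "ratv f \<in> posQ A" and fS: "f \<notin> semigroup_gen A" using fh unfolding holes_def by auto
  have "is_max le (apery A b) (vadd f b)" if b: "b \<in> semigroup_gen A" "b \<noteq> (\<lambda>_. 0)" for b
  proof -
    have diff: "(\<lambda>t. ratv (vadd f b) t - ratv b t) = ratv f"
      by (auto simp: ratv_def vadd_def)
    have fbS: "vadd f b \<in> semigroup_gen A"
    proof (rule ccontr)
      assume nS: "vadd f b \<notin> semigroup_gen A"
      have "ratv (vadd f b) = (\<lambda>t. ratv f t + ratv b t)" by (auto simp: ratv_def vadd_def)
      then have "ratv (vadd f b) \<in> posQ A" using posQ_add[OF fpos S_posQ[OF b(1)]] by simp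
      with nS have "vadd f b \<in> holes A" unfolding holes_def by auto
      then have l1: "le (vadd f b) f" by (rule fmax)
      have "le (vadd (\<lambda>_. 0) f) (vadd b f)" by (rule mono[OF zero])
      then have l2: "le f (vadd f b)" by (simp add: vadd_def add.commute)
      from antis[OF l1 l2] have "vadd f b = f" .
      then have "b = (\<lambda>_. 0)" by (auto simp: vadd_def fun_eq_iff dest: fun_cong)
      with b(2) show False by simp
    qed
    have nf: "ratv f \<notin> ratv ` semigroup_gen A" using fS ratv_inj by blast
    have mem: "vadd f b \<in> apery A b" unfolding apery_def mem_Collect_eq diff
      using fbS fpos nf by blast
    have "le a (vadd f b)" if a: "a \<in> apery A b" for a
    proof -
      have aS: "a \<in> semigroup_gen A" and p: "(\<lambda>t. ratv a t - ratv b t) \<in> posQ A"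
        and np: "(\<lambda>t. ratv a t - ratv b t) \<notin> ratv ` semigroup_gen A"
        using a unfolding apery_def by auto
      have ge: "b t \<le> a t" for t
        using posQ_nonneg[OF p, of t] by (simp add: ratv_def)
      define v where "v = (\<lambda>t. a t - b t)"
      have rv: "ratv v = (\<lambda>t. ratv a t - ratv b t)"
        using ge by (auto simp: ratv_def v_def of_nat_diff)
      have "v \<in> holes A" unfolding holes_def using p np rv by (metis (mono_tags, lifting) image_eqI mem_Collect_eq)
      then have "le v f" by (rule fmax)
      then have "le (vadd v b) (vadd f b)" by (rule mono)
      moreover have "vadd v b = a" using ge by (auto simp: vadd_def v_def)
      ultimately show ?thesis by simp
    qed
    with mem show ?thesis unfolding is_max_def by auto
  qed
  with to show ?thesis by blast
qed

end
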